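(* Suppose $c_0/n\leq p\leq\ln(n)^7/n$ for a sufficiently large constant $c_0>0$. Then with probability $1-o(1)$ as $n\to\infty$ the random graph $G=G(n,p)$ on vertex set $V$ has no set $U\subset V$ with $|U|\leq1/p$ and $\chi(G[U])>\sqrt{np}$.
   Context: $G(n,p)$ is the random graph on $V=\{1,\dots,n\}$ with each possible edge present independently with probability $p$; $G[U]$ is the induced subgraph on $U$ and $\chi$ is the chromatic number. *)

theory Defs
  imports Complex_Main
begin

definition all_edges :: "nat \<Rightarrow> nat set set" where
  "all_edges n = {e. \<exists>i j. i \<in> {1..n} \<and> j \<in> {1..n} \<and> i \<noteq> j \<and> e = {i, j}}"

text \<open>Probability in G(n,p) of the graph property P (a graph is its edge set E):
  each possible edge present independently with probability p.\<close>
definition gnp_prob :: "nat \<Rightarrow> real \<Rightarrow> (nat set set \<Rightarrow> bool) \<Rightarrow> real" where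
  "gnp_prob n p P =
     (\<Sum>E\<in>{E. E \<subseteq> all_edges n \<and> P E}.
        p ^ card E * (1 - p) ^ (card (all_edges n) - card E))"

definition proper_colouring :: "nat set set \<Rightarrow> nat set \<Rightarrow> nat \<Rightarrow> (nat \<Rightarrow> nat) \<Rightarrow> bool" where
  "proper_colouring E U k f \<longleftrightarrow>
     f ` U \<subseteq> {..<k} \<and> (\<forall>u\<in>U. \<forall>v\<in>U. {u, v} \<in> E \<longrightarrow> f u \<noteq> f v)"

definition chromatic_number :: "nat set set \<Rightarrow> nat set \<Rightarrow> nat" where
  "chromatic_number E U = (LEAST k. \<exists>f. proper_colouring E U k f)"

end

theory Submission
  imports Defs "HOL-Real_Asymp.Real_Asymp"
begin



lemma pow_fact_le_exp:
  fixes x :: real assumes "x \<ge> 0"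
  shows "x ^ m / fact m \<le> exp x"
proof -
  have "(\<Sum>n\<in>{m}. x^n /\<^sub>R fact n) \<le> (\<Sum>n. x^n /\<^sub>R fact n)"
    by (rule sum_le_suminf) (use assms summable_exp in auto)
  also have "\<dots> = exp x" using exp_converges sums_unique by metis
  finally show ?thesis by (simp add: divide_inverse mult.commute)
qed

lemma pow_fact_le_3pow: "real m ^ m / fact m \<le> 3 ^ m"
proof -
  have "real m ^ m / fact m \<le> exp (real m)" by (rule pow_fact_le_exp) simp
  also have "\<dots> = exp 1 ^ m" by (simp add: exp_of_nat_mult[symmetric])
  also have "\<dots> \<le> 3 ^ m" by (rule power_mono) (use exp_le in auto)
  finally show ?thesis .
qed

lemma choose_bound:
  fixes p :: real assumes "p \<ge> 0" "m \<ge> 1"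
  shows "real (N choose m) * p ^ m \<le> (3 * real N * p / real m) ^ m"
proof -
  have f: "fact m > (0::real)" by simp
  have "real (N choose m) * fact m \<le> real N ^ m"
    using binomial_fact_pow[of N m] by (metis of_nat_fact of_nat_le_iff of_nat_mult of_nat_power)
  hence c: "real (N choose m) \<le> real N ^ m / fact m" using f by (simp add: field_simps)
  have "real (N choose m) * p ^ m \<le> real N ^ m / fact m * p ^ m"
    using c assms by (intro mult_right_mono) auto
  also have "\<dots> = (3 * real N * p / real m) ^ m * (real m ^ m / fact m / 3 ^ m)"
    using assms by (simp add: power_divide power_mult_distrib field_simps)
  also have "\<dots> \<le> (3 * real N * p / real m) ^ m * 1"
  proof (intro mult_left_mono)
    show "real m ^ m / fact m / 3 ^ m \<le> 1" using pow_fact_le_3pow[of m] by (simp add: divide_le_eq mult.commute)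
  qed (use assms in auto)
  finally show ?thesis by simp
qed




lemma per_w_bound:
  fixes p :: real
  assumes p: "p > 0" and w: "w \<ge> 1" and wp: "real w * p \<le> 1" and h: "h \<ge> 650"
    and np: "real n * p \<le> (2 * real h + 2) ^ 2"
  shows "real (n choose w) * (real ((w choose 2) choose (w*h)) * p ^ (w*h)) \<le> p / 2 ^ w"
proof -
  define x where "x = real w * p"
  have x0: "x > 0" and x1: "x \<le> 1" using p w wp by (auto simp: x_def)
  have c1: "real (n choose w) \<le> (3 * real n / real w) ^ w"
    using choose_bound[of 1 w n] w by simp
  have wc2: "real (w choose 2) \<le> real w ^ 2 / 2"
  proof -
    have "real (w choose 2) = real (w * (w - 1) div 2)" by (simp add: choose_two)
    also have "\<dots> \<le> real (w * (w - 1)) / 2" using of_nat_div_le_of_nat[of "w * (w - 1)" 2, where ?'a=real] by simp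
    also have "\<dots> \<le> real w ^ 2 / 2" by (simp add: power2_eq_square mult_left_mono)
    finally show ?thesis .
  qed
  have c2: "real ((w choose 2) choose (w*h)) * p ^ (w*h) \<le> (3 * real (w choose 2) * p / real (w*h)) ^ (w*h)"
    using choose_bound[of p "w*h" "w choose 2"] p w h by simp
  also have "\<dots> \<le> (3 * x / (2 * real h)) ^ (w*h)"
  proof (rule power_mono)
    have "3 * real (w choose 2) * p / real (w*h) \<le> 3 * (real w ^ 2 / 2) * p / real (w*h)"
      using wc2 p by (intro divide_right_mono mult_right_mono) auto
    also have "\<dots> = 3 * x / (2 * real h)" using w h by (simp add: x_def power2_eq_square field_simps)
    finally show "3 * real (w choose 2) * p / real (w*h) \<le> 3 * x / (2 * real h)" .
  qed (use p in auto)
  also have "\<dots> = ((3 * x / (2 * real h)) ^ h) ^ w" by (simp add: power_mult mult.commute)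
  finally have c2': "real ((w choose 2) choose (w*h)) * p ^ (w*h) \<le> ((3 * x / (2 * real h)) ^ h) ^ w" .
  have beq: "3 * real n / real w * (3 * x / (2 * real h)) ^ h
             = (3 * (real n * p) * (3 / (2 * real h)) ^ h) * x ^ (h - 1)"
  proof -
    have hh: "x ^ h = x * x ^ (h - 1)"
    proof -
      have "h = Suc (h - 1)" using h by simp
      hence "x ^ h = x ^ Suc (h - 1)" by metis
      thus ?thesis by simp
    qed
    have e1: "3 * x / (2 * real h) = (3 / (2 * real h)) * x" by simp
    have gen: "\<And>c y. 3 * real n / real w * (c * (x * y)) = 3 * (real n * p) * c * y"
      using w unfolding x_def by (simp add: field_simps)
    show ?thesis unfolding e1 power_mult_distrib hh gen ..
  qed
  have t: "(3 * (real n * p) * (3 / (2 * real h)) ^ h) * x ^ (h - 1) \<le> 1/4 * x ^ (h - 1)"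
  proof (rule mult_right_mono)
    have q: "0 \<le> 3 / (2 * real h)" "3 / (2 * real h) \<le> 1" using h by auto
    have "(3 / (2 * real h)) ^ h \<le> (3 / (2 * real h)) ^ 3"
      using h q by (intro power_decreasing) auto
    hence "3 * (real n * p) * (3 / (2 * real h)) ^ h \<le> 3 * (2 * real h + 2) ^ 2 * (3 / (2 * real h)) ^ 3"
      using np p q by (intro mult_mono) auto
    also have "\<dots> \<le> 3 * (4 * real h) ^ 2 * (3 / (2 * real h)) ^ 3"
      using h by (intro mult_mono power_mono) auto
    also have "\<dots> = 162 / real h" using h by (simp add: power_divide field_simps power2_eq_square power3_eq_cube)
    also have "\<dots> \<le> 1/4" using h by (simp add: field_simps)
    finally show "3 * (real n * p) * (3 / (2 * real h)) ^ h \<le> 1/4" .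
  qed (use x0 in auto)
  have "real (n choose w) * (real ((w choose 2) choose (w*h)) * p ^ (w*h))
        \<le> (3 * real n / real w) ^ w * ((3 * x / (2 * real h)) ^ h) ^ w"
    using c1 c2' p by (intro mult_mono) auto
  also have "\<dots> = (3 * real n / real w * (3 * x / (2 * real h)) ^ h) ^ w"
    by (simp only: power_mult_distrib)
  also have "\<dots> = (3 * (real n * p) * (3 / (2 * real h)) ^ h * x ^ (h - 1)) ^ w"
    by (simp only: beq)
  also have "\<dots> \<le> (1/4 * x ^ (h - 1)) ^ w"
    by (rule power_mono[OF t]) (use x0 p in auto)
  also have "\<dots> = (1/4) ^ w * x ^ ((h - 1) * w)" by (simp only: power_mult_distrib power_mult[symmetric] mult.commute[of "h - 1" w])
  also have "\<dots> \<le> (1/4) ^ w * x ^ 1"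
    using x0 x1 h w by (intro mult_left_mono power_decreasing) auto
  also have "\<dots> = real w * p / 4 ^ w" by (simp add: x_def power_divide)
  also have "\<dots> \<le> p / 2 ^ w"
  proof -
    have "real w \<le> 2 ^ w" using less_exp[of w] by (metis less_imp_le of_nat_le_iff of_nat_numeral of_nat_power)
    hence "real w * p * 2 ^ w \<le> 2 ^ w * p * 2 ^ w" using p by (intro mult_right_mono) auto
    also have "\<dots> = p * 4 ^ w" by (simp add: power_mult_distrib[symmetric])
    finally show ?thesis by (simp add: field_simps)
  qed
  finally show ?thesis .
qed




lemma colour_lemma:
  assumes "finite U" and noloop: "\<forall>x. {x} \<notin> E"
  shows "(\<forall>W\<subseteq>U. W \<noteq> {} \<longrightarrow> (\<exists>v\<in>W. card {u\<in>W. {u,v} \<in> E} < K)) \<longrightarrow> (\<exists>f. proper_colouring E U K f)"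
  using assms(1)
proof (induction U rule: finite_remove_induct)
  case empty
  then show ?case by (auto simp: proper_colouring_def)
next
  case (remove A)
  show ?case
  proof
    assume hyp: "\<forall>W\<subseteq>A. W \<noteq> {} \<longrightarrow> (\<exists>v\<in>W. card {u\<in>W. {u,v} \<in> E} < K)"
    then obtain v where v: "v \<in> A" "card {u\<in>A. {u,v} \<in> E} < K" using remove.hyps(2) by blast
    from remove.IH[OF v(1)] hyp obtain f where f: "proper_colouring E (A - {v}) K f" by blast
    define N where "N = {u\<in>A - {v}. {u,v} \<in> E}"
    have "card (f ` N) \<le> card N" using remove.hyps(1) by (intro card_image_le) (auto simp: N_def)
    also have "card N \<le> card {u\<in>A. {u,v} \<in> E}" using remove.hyps(1) by (intro card_mono) (auto simp: N_def)
    finally have cN: "card (f ` N) < K" using v(2) by linarith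
    have "\<not> {..<K} \<subseteq> f ` N"
    proof
      assume "{..<K} \<subseteq> f ` N"
      hence "card {..<K} \<le> card (f ` N)" using remove.hyps(1) by (intro card_mono) (auto simp: N_def)
      thus False using cN by simp
    qed
    then obtain c where c: "c < K" "c \<notin> f ` N" by auto
    define g where "g = f(v := c)"
    have "proper_colouring E A K g"
      unfolding proper_colouring_def
    proof (intro conjI ballI impI)
      show "g ` A \<subseteq> {..<K}" using f c unfolding proper_colouring_def g_def by auto
    next
      fix x y assume xy: "x \<in> A" "y \<in> A" "{x, y} \<in> E"
      show "g x \<noteq> g y"
      proof (cases "x = v")
        case True
        show ?thesis
        proof (cases "y = v")
          case True
          thus ?thesis using \<open>x = v\<close> xy noloop by auto
        next
          case False
          hence "y \<in> N" using xy True by (auto simp: N_def insert_commute)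
          thus ?thesis using c True False by (auto simp: g_def)
        qed
      next
        case False
        show ?thesis
        proof (cases "y = v")
          case True
          hence "x \<in> N" using xy False by (auto simp: N_def)
          thus ?thesis using c True False by (auto simp: g_def)
        next
          case False
          thus ?thesis using f xy \<open>x \<noteq> v\<close> unfolding proper_colouring_def g_def by auto
        qed
      qed
    qed
    thus "\<exists>f. proper_colouring E A K f" by blast
  qed
qed

lemma dense_subset:
  assumes "finite U" and noloop: "\<forall>x. {x} \<notin> E" and "\<not> (\<exists>f. proper_colouring E U K f)"
  shows "\<exists>W\<subseteq>U. W \<noteq> {} \<and> (\<forall>v\<in>W. K \<le> card {u\<in>W. {u,v} \<in> E})"
  using colour_lemma[OF assms(1,2), of K] assms(3) by (meson not_le)

lemma edges_lemma:
  assumes W: "finite W" and Ed: "\<forall>e\<in>E. \<exists>a b. a \<noteq> b \<and> e = {a, b}"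
    and deg: "\<forall>v\<in>W. K \<le> card {u\<in>W. {u,v} \<in> E}"
  shows "card W * K \<le> 2 * card {e\<in>E. e \<subseteq> W}"
proof -
  define Pr where "Pr = Sigma W (\<lambda>v. {u\<in>W. {u,v} \<in> E})"
  define EW where "EW = {e\<in>E. e \<subseteq> W}"
  define fib where "fib e = {(v,u). {u,v} = e}" for e :: "'a set"
  have finEW: "finite EW" proof (rule finite_subset[of EW "Pow W"]) show "EW \<subseteq> Pow W" by (auto simp: EW_def) qed (simp add: W)
  have "card W * K = (\<Sum>v\<in>W. K)" by simp
  also have "\<dots> \<le> (\<Sum>v\<in>W. card {u\<in>W. {u,v} \<in> E})" using deg by (intro sum_mono) auto
  also have "\<dots> = card Pr" unfolding Pr_def using W by (simp add: card_SigmaI)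
  also have "card Pr \<le> card (\<Union>e\<in>EW. fib e)"
  proof (rule card_mono)
    have "fib e \<subseteq> e \<times> e" for e by (auto simp: fib_def)
    moreover have "finite e" if "e \<in> EW" for e
    proof -
      have "e \<subseteq> W" using that by (simp add: EW_def)
      thus ?thesis using W by (rule finite_subset)
    qed
    ultimately show "finite (\<Union>e\<in>EW. fib e)" using finEW by (meson finite_SigmaI finite_UN_I finite_subset)
    show "Pr \<subseteq> (\<Union>e\<in>EW. fib e)" unfolding Pr_def EW_def fib_def by blast
  qed
  also have "\<dots> \<le> (\<Sum>e\<in>EW. card (fib e))" using finEW by (rule card_UN_le)
  also have "\<dots> \<le> (\<Sum>e\<in>EW. 2)"
  proof (rule sum_mono)
    fix e assume "e \<in> EW"
    hence "e \<in> E" by (simp add: EW_def)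
    with Ed obtain a b where ab: "a \<noteq> b" "e = {a, b}" by blast
    have "fib e \<subseteq> {(a,b),(b,a)}" using ab unfolding fib_def by (auto simp: doubleton_eq_iff)
    hence "card (fib e) \<le> card {(a,b),(b,a)}" by (intro card_mono) auto
    also have "\<dots> \<le> 2" using ab by simp
    finally show "card (fib e) \<le> 2" .
  qed
  also have "\<dots> = 2 * card EW" by simp
  finally show ?thesis by (simp add: EW_def)
qed




lemma all_edges_alt: "all_edges n = {e. e \<subseteq> {1..n} \<and> card e = 2}"
proof
  show "all_edges n \<subseteq> {e. e \<subseteq> {1..n} \<and> card e = 2}" unfolding all_edges_def by auto
  show "{e. e \<subseteq> {1..n} \<and> card e = 2} \<subseteq> all_edges n"
  proof
    fix e assume "e \<in> {e. e \<subseteq> {1..n} \<and> card e = 2}"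
    then obtain x y where "e = {x, y}" "x \<noteq> y" "e \<subseteq> {1..n}" by (auto simp: card_2_iff)
    thus "e \<in> all_edges n" unfolding all_edges_def by blast
  qed
qed

lemma finite_all_edges: "finite (all_edges n)"
  by (rule finite_subset[of _ "Pow {1..n}"]) (auto simp: all_edges_alt)

lemma prob_superset:
  fixes p :: real
  assumes F: "F \<subseteq> A" and A: "finite A"
  shows "(\<Sum>E\<in>{E. E \<subseteq> A \<and> F \<subseteq> E}. p ^ card E * (1 - p) ^ (card A - card E)) = p ^ card F"
proof -
  define g where "g i = (if i \<in> F then 0 else 1 - p)" for i
  have "(\<Prod>i\<in>A. p + g i) = (\<Sum>X\<in>Pow A. (\<Prod>i\<in>X. p) * (\<Prod>i\<in>A - X. g i))"
    using A by (rule prod_add)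
  also have "\<dots> = (\<Sum>X\<in>Pow A. if F \<subseteq> X then p ^ card X * (1 - p) ^ (card A - card X) else 0)"
  proof (rule sum.cong)
    fix X assume X: "X \<in> Pow A"
    show "(\<Prod>i\<in>X. p) * (\<Prod>i\<in>A - X. g i) = (if F \<subseteq> X then p ^ card X * (1 - p) ^ (card A - card X) else 0)"
    proof (cases "F \<subseteq> X")
      case True
      have "(\<Prod>i\<in>A - X. g i) = (\<Prod>i\<in>A - X. 1 - p)" using True by (intro prod.cong) (auto simp: g_def)
      also have "\<dots> = (1 - p) ^ (card A - card X)" using X A by (simp add: card_Diff_subset finite_subset)
      finally show ?thesis using True by simp
    next
      case False
      then obtain i where "i \<in> F" "i \<notin> X" by auto
      hence "i \<in> A - X" "g i = 0" using F by (auto simp: g_def)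
      hence "(\<Prod>i\<in>A - X. g i) = 0" using A by (intro prod_zero) auto
      thus ?thesis using False by simp
    qed
  qed simp
  also have "\<dots> = (\<Sum>X\<in>{X \<in> Pow A. F \<subseteq> X}. p ^ card X * (1 - p) ^ (card A - card X))"
    by (rule sum.inter_filter[symmetric]) (simp add: A)
  also have "{X \<in> Pow A. F \<subseteq> X} = {E. E \<subseteq> A \<and> F \<subseteq> E}" by auto
  finally have eq: "(\<Prod>i\<in>A. p + g i) = (\<Sum>E\<in>{E. E \<subseteq> A \<and> F \<subseteq> E}. p ^ card E * (1 - p) ^ (card A - card E))" .
  have "(\<Prod>i\<in>A. p + g i) = (\<Prod>i\<in>A. if i \<in> F then p else 1)" by (intro prod.cong) (auto simp: g_def)
  also have "\<dots> = (\<Prod>i\<in>A \<inter> F. p)" using A by (simp add: prod.If_cases)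
  also have "A \<inter> F = F" using F by auto
  finally show ?thesis using eq by simp
qed

lemma union_bound:
  fixes p :: real
  assumes p: "0 \<le> p" "p \<le> 1" and FF: "FF \<subseteq> Pow (all_edges n)"
    and cov: "\<And>E. E \<subseteq> all_edges n \<Longrightarrow> P E \<Longrightarrow> \<exists>F\<in>FF. F \<subseteq> E"
  shows "gnp_prob n p P \<le> (\<Sum>F\<in>FF. p ^ card F)"
proof -
  define A where "A = all_edges n"
  define wt where "wt (E::nat set set) = p ^ card E * (1 - p) ^ (card A - card E)" for E
  have finA: "finite A" by (simp add: A_def finite_all_edges)
  have finFF: "finite FF" using FF finA by (metis A_def finite_Pow_iff finite_subset)
  have wt0: "wt E \<ge> 0" for E using p by (simp add: wt_def)
  have "gnp_prob n p P = (\<Sum>E\<in>{E. E \<subseteq> A \<and> P E}. wt E)" by (simp add: gnp_prob_def A_def wt_def)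
  also have "\<dots> \<le> (\<Sum>E\<in>{E. E \<subseteq> A \<and> P E}. \<Sum>F\<in>FF. if F \<subseteq> E then wt E else 0)"
  proof (rule sum_mono)
    fix E assume E: "E \<in> {E. E \<subseteq> A \<and> P E}"
    hence "E \<subseteq> all_edges n" "P E" by (auto simp: A_def)
    then obtain F where F: "F \<in> FF" "F \<subseteq> E" using cov by blast
    have "wt E = (if F \<subseteq> E then wt E else 0)" using F by simp
    also have "\<dots> \<le> (\<Sum>F\<in>FF. if F \<subseteq> E then wt E else 0)"
      by (rule member_le_sum) (use F finFF wt0 in auto)
    finally show "wt E \<le> (\<Sum>F\<in>FF. if F \<subseteq> E then wt E else 0)" .
  qed
  also have "\<dots> \<le> (\<Sum>E\<in>Pow A. \<Sum>F\<in>FF. if F \<subseteq> E then wt E else 0)"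
    by (rule sum_mono2) (use finA wt0 in \<open>auto intro!: sum_nonneg\<close>)
  also have "\<dots> = (\<Sum>F\<in>FF. \<Sum>E\<in>Pow A. if F \<subseteq> E then wt E else 0)" by (rule sum.swap)
  also have "\<dots> = (\<Sum>F\<in>FF. p ^ card F)"
  proof (rule sum.cong)
    fix F assume F: "F \<in> FF"
    have "(\<Sum>E\<in>Pow A. if F \<subseteq> E then wt E else 0) = (\<Sum>E\<in>{E \<in> Pow A. F \<subseteq> E}. wt E)"
      by (rule sum.inter_filter[symmetric]) (simp add: finA)
    also have "{E \<in> Pow A. F \<subseteq> E} = {E. E \<subseteq> A \<and> F \<subseteq> E}" by auto
    also have "(\<Sum>E\<in>{E. E \<subseteq> A \<and> F \<subseteq> E}. wt E) = p ^ card F"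
      unfolding wt_def using F FF finA by (intro prob_superset) (auto simp: A_def)
    finally show "(\<Sum>E\<in>Pow A. if F \<subseteq> E then wt E else 0) = p ^ card F" .
  qed simp
  finally show ?thesis .
qed




lemma sum_UN_le_nonneg:
  fixes f :: "'a \<Rightarrow> real"
  assumes "finite I" "\<forall>i\<in>I. finite (A i)" "\<And>x. f x \<ge> 0"
  shows "sum f (\<Union>i\<in>I. A i) \<le> (\<Sum>i\<in>I. sum f (A i))"
  using assms(1,2)
proof (induction I rule: finite_induct)
  case empty then show ?case by simp
next
  case (insert i I)
  have fin: "finite (\<Union>i\<in>I. A i)" using insert by auto
  have "sum f (\<Union>j\<in>insert i I. A j) = sum f (A i \<union> (\<Union>j\<in>I. A j))" by simp
  also have "\<dots> = sum f (A i) + sum f (\<Union>j\<in>I. A j) - sum f (A i \<inter> (\<Union>j\<in>I. A j))"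
    using insert fin by (subst sum_Un) auto
  also have "\<dots> \<le> sum f (A i) + sum f (\<Union>j\<in>I. A j)" using assms(3) by (simp add: sum_nonneg)
  also have "\<dots> \<le> sum f (A i) + (\<Sum>j\<in>I. sum f (A j))" using insert by simp
  also have "\<dots> = (\<Sum>j\<in>insert i I. sum f (A j))" using insert by simp
  finally show ?case .
qed

lemma geom_half: "(\<Sum>w=1..n. (1/2::real) ^ w) = 1 - (1/2) ^ n"
  by (induction n) (auto simp: field_simps)

lemma main_bound:
  fixes p :: real
  assumes p: "0 < p" "p \<le> 1" and np: "real n * p \<ge> 1690000"
  shows "gnp_prob n p (\<lambda>E. \<exists>U \<subseteq> {1..n}. real (card U) \<le> 1 / p \<and>
                 real (chromatic_number E U) > sqrt (real n * p)) \<le> p"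
proof -
  define s where "s = sqrt (real n * p)"
  define K where "K = nat \<lfloor>s\<rfloor>"
  define h where "h = K div 2"
  have s1300: "s \<ge> 1300" unfolding s_def using np real_le_rsqrt[of 1300 "real n * p"] by simp
  have Ks: "real K \<le> s" "s < real K + 1" unfolding K_def using s1300 by linarith+
  have K1300: "K \<ge> 1300" using Ks s1300 by linarith
  have h650: "h \<ge> 650" using K1300 by (simp add: h_def)
  have K2h: "2 * h \<le> K" "K \<le> 2 * h + 1" by (auto simp: h_def)
  have npb: "real n * p \<le> (2 * real h + 2) ^ 2"
  proof -
    have "real n * p = s ^ 2" unfolding s_def using p by simp
    also have "\<dots> \<le> (real K + 1) ^ 2" using Ks s1300 by (intro power_mono) auto
    also have "\<dots> \<le> (2 * real h + 2) ^ 2" using K2h by (intro power_mono) auto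
    finally show ?thesis .
  qed
  define WW where "WW = {W. W \<subseteq> {1..n} \<and> W \<noteq> {} \<and> real (card W) * p \<le> 1}"
  define S where "S W = {F. F \<subseteq> all_edges n \<inter> Pow W \<and> card F = card W * h}" for W
  define FF where "FF = (\<Union>W\<in>WW. S W)"
  have finWW: "finite WW" by (rule finite_subset[of _ "Pow {1..n}"]) (auto simp: WW_def)
  have finS: "finite (S W)" for W
    by (rule finite_subset[of _ "Pow (all_edges n)"]) (auto simp: S_def finite_all_edges)
  let ?P = "\<lambda>E. \<exists>U \<subseteq> {1..n}. real (card U) \<le> 1 / p \<and> real (chromatic_number E U) > sqrt (real n * p)"
  have "gnp_prob n p ?P \<le> (\<Sum>F\<in>FF. p ^ card F)"
  proof (rule union_bound)
    show "FF \<subseteq> Pow (all_edges n)" by (auto simp: FF_def S_def)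
  next
    fix E assume E: "E \<subseteq> all_edges n" and "?P E"
    then obtain U where U: "U \<subseteq> {1..n}" "real (card U) \<le> 1 / p" "real (chromatic_number E U) > s"
      by (auto simp: s_def)
    have finU: "finite U" using U(1) finite_subset by blast
    have "chromatic_number E U > K" using U(3) Ks by linarith
    hence nocol: "\<not> (\<exists>f. proper_colouring E U K f)"
      unfolding chromatic_number_def using Least_le not_le by metis
    have noloop: "\<forall>x. {x} \<notin> E" using E by (auto simp: all_edges_alt)
    obtain W where W: "W \<subseteq> U" "W \<noteq> {}" "\<forall>v\<in>W. K \<le> card {u\<in>W. {u,v} \<in> E}"
      using dense_subset[OF finU noloop nocol] by blast
    have finW: "finite W" using W(1) finU finite_subset by blast
    have Ed: "\<forall>e\<in>E. \<exists>a b. a \<noteq> b \<and> e = {a, b}" using E unfolding all_edges_def by blast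
    have "card W * K \<le> 2 * card {e\<in>E. e \<subseteq> W}" using edges_lemma[OF finW Ed W(3)] .
    moreover have "card W * (2 * h) \<le> card W * K" using K2h by simp
    ultimately have "card W * h \<le> card {e\<in>E. e \<subseteq> W}" by linarith
    then obtain F where F: "F \<subseteq> {e\<in>E. e \<subseteq> W}" "card F = card W * h"
      by (meson obtain_subset_with_card_n)
    have "real (card W) \<le> real (card U)" using W(1) finU by (simp add: card_mono)
    hence "real (card W) * p \<le> real (card U) * p" using p by (intro mult_right_mono) auto
    moreover have "real (card U) * p \<le> 1" using U(2) p by (simp add: pos_le_divide_eq)
    ultimately have "real (card W) * p \<le> 1" by linarith
    hence "W \<in> WW" using W U(1) by (auto simp: WW_def)
    moreover have "F \<in> S W" using F E by (auto simp: S_def)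
    ultimately show "\<exists>F\<in>FF. F \<subseteq> E" using F(1) unfolding FF_def by blast
  qed (use p in auto)
  also have "\<dots> \<le> (\<Sum>W\<in>WW. \<Sum>F\<in>S W. p ^ card F)"
    unfolding FF_def using finWW finS p by (intro sum_UN_le_nonneg) auto
  also have "\<dots> = (\<Sum>W\<in>WW. real ((card W choose 2) choose (card W * h)) * p ^ (card W * h))"
  proof (rule sum.cong)
    fix W assume W: "W \<in> WW"
    have "all_edges n \<inter> Pow W = {B. B \<subseteq> W \<and> card B = 2}" using W by (auto simp: WW_def all_edges_alt)
    hence cE: "card (all_edges n \<inter> Pow W) = card W choose 2"
      using W finite_subset[of W "{1..n}"] by (auto simp: WW_def n_subsets)
    have "card (S W) = (card W choose 2) choose (card W * h)"
      unfolding S_def using cE n_subsets[of "all_edges n \<inter> Pow W"] finite_all_edges by simp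
    moreover have "(\<Sum>F\<in>S W. p ^ card F) = (\<Sum>F\<in>S W. p ^ (card W * h))"
      by (rule sum.cong) (auto simp: S_def)
    ultimately show "(\<Sum>F\<in>S W. p ^ card F) = real ((card W choose 2) choose (card W * h)) * p ^ (card W * h)"
      by simp
  qed simp
  also have "\<dots> = (\<Sum>w\<in>{1..n}. \<Sum>W\<in>{W \<in> WW. card W = w}. real ((card W choose 2) choose (card W * h)) * p ^ (card W * h))"
  proof (rule sum.group[symmetric])
    show "card ` WW \<subseteq> {1..n}"
    proof
      fix w assume "w \<in> card ` WW"
      then obtain W where W: "W \<in> WW" "w = card W" by blast
      have "finite W" using W finite_subset[of W "{1..n}"] by (auto simp: WW_def)
      hence "card W \<ge> 1" using W by (auto simp: WW_def Suc_le_eq card_gt_0_iff)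
      moreover have "card W \<le> card {1..n}" using W by (intro card_mono) (auto simp: WW_def)
      ultimately show "w \<in> {1..n}" using W by simp
    qed
  qed (use finWW in auto)
  also have "\<dots> \<le> (\<Sum>w\<in>{1..n}. p * (1/2) ^ w)"
  proof (rule sum_mono)
    fix w assume w: "w \<in> {1..n}"
    define g where "g = real ((w choose 2) choose (w * h)) * p ^ (w * h)"
    have g0: "g \<ge> 0" using p by (simp add: g_def)
    have "(\<Sum>W\<in>{W \<in> WW. card W = w}. real ((card W choose 2) choose (card W * h)) * p ^ (card W * h))
          = (\<Sum>W\<in>{W \<in> WW. card W = w}. g)" by (rule sum.cong) (auto simp: g_def)
    also have "\<dots> = real (card {W \<in> WW. card W = w}) * g" by simp
    also have "\<dots> \<le> p * (1/2) ^ w"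
    proof (cases "{W \<in> WW. card W = w} = {}")
      case True
      hence "card {W \<in> WW. card W = w} = 0" by (simp only: card.empty)
      thus ?thesis using p by simp
    next
      case False
      then obtain W where W: "W \<in> WW" "card W = w" by blast
      hence wp: "real w * p \<le> 1" by (auto simp: WW_def)
      have "card {W \<in> WW. card W = w} \<le> card {B. B \<subseteq> {1..n} \<and> card B = w}"
        by (intro card_mono) (auto simp: WW_def)
      also have "\<dots> = n choose w" using n_subsets[of "{1..n}" w] by simp
      finally have "real (card {W \<in> WW. card W = w}) * g \<le> real (n choose w) * g"
        using g0 by (intro mult_right_mono) auto
      also have "\<dots> \<le> p / 2 ^ w" unfolding g_def
        using per_w_bound[of p w h n] p w wp h650 npb by simp
      also have "\<dots> = p * (1/2) ^ w" by (simp add: power_divide)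
      finally show ?thesis .
    qed
    finally show "(\<Sum>W\<in>{W \<in> WW. card W = w}. real ((card W choose 2) choose (card W * h)) * p ^ (card W * h)) \<le> p * (1/2) ^ w" .
  qed
  also have "\<dots> = p * (1 - (1/2) ^ n)" by (metis geom_half sum_distrib_left)
  also have "\<dots> \<le> p" using p by (simp add: mult_left_le)
  finally show ?thesis .
qed




lemma gnp_nonneg: "0 \<le> p \<Longrightarrow> p \<le> 1 \<Longrightarrow> 0 \<le> gnp_prob n p P"
  unfolding gnp_prob_def by (intro sum_nonneg) auto

theorem lemma12:
  shows "\<exists>C>0. \<forall>c0\<ge>C. \<forall>p :: nat \<Rightarrow> real.
    (\<forall>\<^sub>F n in sequentially. c0 / real n \<le> p n \<and> p n \<le> ln (real n) ^ 7 / real n) \<longrightarrow>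
    ((\<lambda>n. gnp_prob n (p n)
        (\<lambda>E. \<exists>U \<subseteq> {1..n}. real (card U) \<le> 1 / p n \<and>
                 real (chromatic_number E U) > sqrt (real n * p n))) \<longlonglongrightarrow> 0)"
proof (intro exI[of _ 1690000] conjI allI impI)
  fix c0 :: real and p :: "nat \<Rightarrow> real"
  assume c0: "1690000 \<le> c0"
  assume ev: "\<forall>\<^sub>F n in sequentially. c0 / real n \<le> p n \<and> p n \<le> ln (real n) ^ 7 / real n"
  have lim: "(\<lambda>n. ln (real n) ^ 7 / real n) \<longlonglongrightarrow> 0" by real_asymp
  hence ev1: "\<forall>\<^sub>F n in sequentially. ln (real n) ^ 7 / real n < 1"
    by (rule order_tendstoD) simp
  have ev2: "\<forall>\<^sub>F n in sequentially. n \<ge> 1" by (rule eventually_ge_at_top)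
  have good: "\<forall>\<^sub>F n in sequentially. 0 < p n \<and> p n \<le> 1 \<and> 1690000 \<le> real n * p n \<and> p n \<le> ln (real n) ^ 7 / real n"
    using ev ev1 ev2
  proof eventually_elim
    case (elim n)
    have n: "real n > 0" using elim by simp
    have "0 < c0 / real n" using c0 n by simp
    hence "0 < p n" using elim by linarith
    moreover have "p n \<le> 1" using elim by linarith
    moreover have "c0 \<le> real n * p n" using elim n by (simp add: divide_le_eq mult.commute)
    ultimately show ?case using c0 elim by linarith
  qed
  have plim: "p \<longlonglongrightarrow> 0"
  proof (rule tendsto_sandwich[of "\<lambda>n. 0" _ _ "\<lambda>n. ln (real n) ^ 7 / real n"])
    show "\<forall>\<^sub>F n in sequentially. 0 \<le> p n" using good by eventually_elim auto
    show "\<forall>\<^sub>F n in sequentially. p n \<le> ln (real n) ^ 7 / real n" using good by eventually_elim auto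
  qed (use lim in auto)
  show "(\<lambda>n. gnp_prob n (p n)
        (\<lambda>E. \<exists>U \<subseteq> {1..n}. real (card U) \<le> 1 / p n \<and>
                 real (chromatic_number E U) > sqrt (real n * p n))) \<longlonglongrightarrow> 0"
  proof (rule tendsto_sandwich[of "\<lambda>n. 0" _ _ p])
    show "\<forall>\<^sub>F n in sequentially. 0 \<le> gnp_prob n (p n)
        (\<lambda>E. \<exists>U \<subseteq> {1..n}. real (card U) \<le> 1 / p n \<and>
                 real (chromatic_number E U) > sqrt (real n * p n))"
      using good by eventually_elim (intro gnp_nonneg, auto)
    show "\<forall>\<^sub>F n in sequentially. gnp_prob n (p n)
        (\<lambda>E. \<exists>U \<subseteq> {1..n}. real (card U) \<le> 1 / p n \<and>
                 real (chromatic_number E U) > sqrt (real n * p n)) \<le> p n"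
      using good by eventually_elim (intro main_bound, auto)
  qed (use plim in auto)
qed simp


end
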